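(* For each $n\ge 1$ let $G_n$ be a random graph with $n$ vertices drawn from a given class of random graphs. Let $d_{n,k}$ be the probability that a uniformly randomly selected vertex of $G_n$ has degree $k$, and let $d_{n,k,\ell}$ be the probability that two different uniformly randomly selected (ordered) vertices of $G_n$ have degrees $k$ and $\ell$, respectively. Suppose that: 1. There exists a limiting degree distribution $(\overline d_k)_{k\ge1}$ with $\log \overline d_k \sim k\log q$ as $k\to\infty$, where $q$ is a real constant with $0<q<1$. 2. As $n\to\infty$, $k\to\infty$, $\ell\to\infty$, and uniformly for $k,\ell\le C\log n$ (for an arbitrary constant $C>0$), $d_{n,k}\sim \overline d_k$ and $d_{n,k,\ell}\sim \overline d_k\,\overline d_\ell$. 3. There exists $\overline q<1$ such that, uniformly for all $n,k,\ell\ge1$, $d_{n,k}=O(\overline q^{\,k})$ and $d_{n,k,\ell}=O(\overline q^{\,k+\ell})$. Let $\Delta_n$ be the maximum degree of $G_n$. Then $\Delta_n/\log n \to 1/\log(1/q)$ in probability, and $\mathbb{E}\,\Delta_n \sim \frac{1}{\log(1/q)}\log n$ as $n\to\infty$. *)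

theory Defs
  imports "HOL-Probability.Probability"
begin

definition simple_graph_on :: "nat \<Rightarrow> (nat \<Rightarrow> nat \<Rightarrow> bool) \<Rightarrow> bool" where
  "simple_graph_on n E \<longleftrightarrow> (\<forall>u v. E u v \<longrightarrow> u < n \<and> v < n \<and> u \<noteq> v \<and> E v u)"

definition deg :: "nat \<Rightarrow> (nat \<Rightarrow> nat \<Rightarrow> bool) \<Rightarrow> nat \<Rightarrow> nat" where
  "deg n E v = card {u. u < n \<and> E v u}"

definition max_deg :: "nat \<Rightarrow> (nat \<Rightarrow> nat \<Rightarrow> bool) \<Rightarrow> nat" where
  "max_deg n E = Max (deg n E ` {..<n})"

definition dnk :: "(nat \<Rightarrow> (nat \<Rightarrow> nat \<Rightarrow> bool) pmf) \<Rightarrow> nat \<Rightarrow> nat \<Rightarrow> real" where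
  "dnk G n k = (\<Sum>v<n. measure_pmf.prob (G n) {E. deg n E v = k}) / real n"

definition dnkl :: "(nat \<Rightarrow> (nat \<Rightarrow> nat \<Rightarrow> bool) pmf) \<Rightarrow> nat \<Rightarrow> nat \<Rightarrow> nat \<Rightarrow> real" where
  "dnkl G n k l = (\<Sum>v<n. \<Sum>w<n. if v \<noteq> w
      then measure_pmf.prob (G n) {E. deg n E v = k \<and> deg n E w = l} else 0)
      / (real n * (real n - 1))"

end

theory Submission
  imports Defs
begin


lemma sum_pow_le:
  fixes p :: real
  assumes "0 \<le> p" "p < 1"
  shows "(\<Sum>k\<in>{m..M}. p ^ k) \<le> p ^ m / (1 - p)"
proof -
  have "p ^ Suc M \<ge> 0" using assms by simp
  then show ?thesis using assms by (auto simp: sum_gp divide_simps)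
qed

lemma deg_le: "deg n E v \<le> n"
proof -
  have "{u. u < n \<and> E v u} \<subseteq> {..<n}" by auto
  then have "card {u. u < n \<and> E v u} \<le> card {..<n}" by (rule card_mono[rotated]) auto
  then show ?thesis by (simp add: deg_def)
qed

lemma max_deg_le: "n \<ge> 1 \<Longrightarrow> max_deg n E \<le> n"
proof -
  assume "n \<ge> 1"
  then have ne: "{..<n} \<noteq> {}" by (auto simp: lessThan_empty_iff)
  then have "Max (deg n E ` {..<n}) \<in> deg n E ` {..<n}" by (intro Max_in) auto
  then show ?thesis using deg_le by (auto simp: max_deg_def)
qed

lemma max_deg_ge: "v < n \<Longrightarrow> deg n E v \<le> max_deg n E"
  unfolding max_deg_def by (intro Max_ge) auto

lemma max_deg_ex: "n \<ge> 1 \<Longrightarrow> \<exists>v<n. max_deg n E = deg n E v"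
proof -
  assume "n \<ge> 1"
  then have ne: "{..<n} \<noteq> {}" by (auto simp: lessThan_empty_iff)
  then have "Max (deg n E ` {..<n}) \<in> deg n E ` {..<n}" by (intro Max_in) auto
  then show ?thesis by (auto simp: max_deg_def)
qed

lemma dnk_nonneg: "dnk G n k \<ge> 0"
  unfolding dnk_def by (intro divide_nonneg_nonneg sum_nonneg) auto

lemma dnkl_nonneg: "dnkl G n k l \<ge> 0"
  unfolding dnkl_def
  by (cases "n = 0") (auto intro!: divide_nonneg_nonneg sum_nonneg mult_nonneg_nonneg)

lemma n_dnk: "n \<ge> 1 \<Longrightarrow> real n * dnk G n k = (\<Sum>v<n. measure_pmf.prob (G n) {E. deg n E v = k})"
  unfolding dnk_def by simp

lemma union_bound:
  assumes "n \<ge> 1"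
  shows "measure_pmf.prob (G n) {E. m \<le> max_deg n E} \<le> (\<Sum>k\<in>{m..n}. real n * dnk G n k)"
proof -
  have sub: "{E. m \<le> max_deg n E} \<subseteq> (\<Union>i\<in>{..<n} \<times> {m..n}. {E. deg n E (fst i) = snd i})"
  proof
    fix E assume "E \<in> {E. m \<le> max_deg n E}"
    then have m: "m \<le> max_deg n E" by simp
    obtain v where v: "v < n" "max_deg n E = deg n E v" using max_deg_ex[OF assms] by blast
    then have "(v, deg n E v) \<in> {..<n} \<times> {m..n}" using m deg_le[of n E v] by auto
    then show "E \<in> (\<Union>i\<in>{..<n} \<times> {m..n}. {E. deg n E (fst i) = snd i})" by force
  qed
  have "measure_pmf.prob (G n) {E. m \<le> max_deg n E}
     \<le> measure_pmf.prob (G n) (\<Union>i\<in>{..<n} \<times> {m..n}. {E. deg n E (fst i) = snd i})"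
    by (rule measure_pmf.finite_measure_mono[OF sub]) simp
  also have "\<dots> \<le> (\<Sum>i\<in>{..<n} \<times> {m..n}. measure_pmf.prob (G n) {E. deg n E (fst i) = snd i})"
    by (rule measure_pmf.finite_measure_subadditive_finite) auto
  also have "\<dots> = (\<Sum>v<n. \<Sum>k\<in>{m..n}. measure_pmf.prob (G n) {E. deg n E v = k})"
    by (subst sum.cartesian_product) (simp add: split_def)
  also have "\<dots> = (\<Sum>k\<in>{m..n}. \<Sum>v<n. measure_pmf.prob (G n) {E. deg n E v = k})"
    by (rule sum.swap)
  also have "\<dots> = (\<Sum>k\<in>{m..n}. real n * dnk G n k)"
    using n_dnk[OF assms] by simp
  finally show ?thesis .
qed



lemma pmf_int_bdd:
  fixes f :: "'a \<Rightarrow> real"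
  assumes "\<And>x. \<bar>f x\<bar> \<le> c"
  shows "integrable (measure_pmf p) f"
  by (rule measure_pmf.integrable_const_bound[where B=c]) (auto simp: assms)


lemma second_moment:
  assumes n: "n \<ge> 2" and pos: "dnk G n k > 0"
  shows "measure_pmf.prob (G n) {E. \<forall>v<n. deg n E v \<noteq> k}
           \<le> 1 / (real n * dnk G n k) + dnkl G n k k / (dnk G n k)^2 - 1"
proof -
  define M where "M = measure_pmf (G n)"
  define A where "A v = {E. deg n E v = k}" for v
  define X where "X E = (\<Sum>v<n. indicator (A v) E :: real)" for E
  define \<mu> where "\<mu> = real n * dnk G n k"
  have mupos: "\<mu> > 0" using n pos by (simp add: \<mu>_def)
  have Xb: "\<bar>X E\<bar> \<le> real n" for E
  proof -
    have "\<bar>X E\<bar> \<le> (\<Sum>v<n. \<bar>indicator (A v) E :: real\<bar>)" unfolding X_def by (rule sum_abs)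
    also have "\<dots> \<le> (\<Sum>v<n. 1)" by (intro sum_mono) (auto simp: indicator_def)
    finally show ?thesis by simp
  qed
  have intX: "integrable M X" unfolding M_def by (rule pmf_int_bdd[OF Xb])
  have intX2: "integrable M (\<lambda>E. (X E)^2)" unfolding M_def
    by (rule pmf_int_bdd[where c="real n ^ 2"]) (metis Xb abs_of_nat abs_power2 power2_le_iff_abs_le of_nat_0_le_iff)
  have EX: "integral\<^sup>L M X = \<mu>"
  proof -
    have "integral\<^sup>L M X = (\<Sum>v<n. integral\<^sup>L M (indicator (A v)))"
      unfolding X_def M_def by (rule Bochner_Integration.integral_sum) (auto intro: pmf_int_bdd[where c=1])
    also have "\<dots> = (\<Sum>v<n. measure_pmf.prob (G n) (A v))" by (simp add: M_def)
    also have "\<dots> = \<mu>" unfolding \<mu>_def A_def using n by (simp add: dnk_def)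
    finally show ?thesis .
  qed
  have EX2: "integral\<^sup>L M (\<lambda>E. (X E)^2) = \<mu> + real n * (real n - 1) * dnkl G n k k"
  proof -
    have sq: "(X E)^2 = (\<Sum>v<n. \<Sum>w<n. indicator (A v \<inter> A w) E)" for E
      unfolding X_def power2_eq_square sum_product by (simp add: indicator_inter_arith)
    have "integral\<^sup>L M (\<lambda>E. (X E)^2) = (\<Sum>v<n. \<Sum>w<n. integral\<^sup>L M (indicator (A v \<inter> A w)))"
    proof -
      have ii: "integrable (measure_pmf (G n)) (indicator (A v \<inter> A w) :: _ \<Rightarrow> real)" for v w
        by (rule pmf_int_bdd[where c=1]) (auto simp: indicator_def)
      have "integral\<^sup>L M (\<lambda>E. (X E)^2) = (\<Sum>v<n. integral\<^sup>L M (\<lambda>E. \<Sum>w<n. indicator (A v \<inter> A w) E))"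
        unfolding sq M_def by (rule Bochner_Integration.integral_sum) (auto intro!: Bochner_Integration.integrable_sum ii)
      also have "\<dots> = (\<Sum>v<n. \<Sum>w<n. integral\<^sup>L M (indicator (A v \<inter> A w)))"
        unfolding M_def by (intro sum.cong refl Bochner_Integration.integral_sum ii)
      finally show ?thesis .
    qed
    also have "\<dots> = (\<Sum>v<n. \<Sum>w<n. measure_pmf.prob (G n) (A v \<inter> A w))" by (simp add: M_def)
    also have "\<dots> = (\<Sum>v<n. measure_pmf.prob (G n) (A v) + (\<Sum>w<n. if v \<noteq> w then measure_pmf.prob (G n) (A v \<inter> A w) else 0))"
    proof (rule sum.cong[OF refl])
      fix v assume v: "v \<in> {..<n}"
      have "(\<Sum>w<n. measure_pmf.prob (G n) (A v \<inter> A w))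
          = (\<Sum>w<n. (if w = v then measure_pmf.prob (G n) (A v) else 0) + (if v \<noteq> w then measure_pmf.prob (G n) (A v \<inter> A w) else 0))"
        by (rule sum.cong) auto
      also have "\<dots> = measure_pmf.prob (G n) (A v) + (\<Sum>w<n. if v \<noteq> w then measure_pmf.prob (G n) (A v \<inter> A w) else 0)"
        using v by (simp add: sum.distrib)
      finally show "(\<Sum>w<n. measure_pmf.prob (G n) (A v \<inter> A w)) = measure_pmf.prob (G n) (A v) + (\<Sum>w<n. if v \<noteq> w then measure_pmf.prob (G n) (A v \<inter> A w) else 0)" .
    qed
    also have "\<dots> = \<mu> + real n * (real n - 1) * dnkl G n k k"
    proof -
      have nn: "real n * (real n - 1) \<noteq> 0" using n by simp
      have "(\<Sum>v<n. measure_pmf.prob (G n) (A v)) = \<mu>" unfolding \<mu>_def A_def using n by (simp add: dnk_def)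
      moreover have "(\<Sum>v<n. \<Sum>w<n. if v \<noteq> w then measure_pmf.prob (G n) (A v \<inter> A w) else 0) = real n * (real n - 1) * dnkl G n k k"
      proof -
        have AA: "A v \<inter> A w = {E. deg n E v = k \<and> deg n E w = k}" for v w by (auto simp: A_def)
        show ?thesis unfolding dnkl_def AA using nn by simp
      qed
      ultimately show ?thesis by (simp add: sum.distrib)
    qed
    finally show ?thesis .
  qed
  have var: "integral\<^sup>L M (\<lambda>E. (X E - \<mu>)^2) = \<mu> + real n * (real n - 1) * dnkl G n k k - \<mu>^2"
  proof -
    have "(\<lambda>E. (X E - \<mu>)^2) = (\<lambda>E. (X E)^2 - 2 * \<mu> * X E + \<mu>^2)"
      by (auto simp: power2_eq_square algebra_simps)
    then have "integral\<^sup>L M (\<lambda>E. (X E - \<mu>)^2) = integral\<^sup>L M (\<lambda>E. (X E)^2) - 2 * \<mu> * integral\<^sup>L M X + \<mu>^2"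
      using intX intX2 by (simp add: M_def prob_space.prob_space measure_pmf.prob_space_axioms)
    then show ?thesis using EX EX2 by (simp add: power2_eq_square)
  qed
  have "measure_pmf.prob (G n) {E. \<forall>v<n. deg n E v \<noteq> k} \<le> measure M {E \<in> space M. \<mu> \<le> \<bar>X E - integral\<^sup>L M X\<bar>}"
  proof -
    have "{E. \<forall>v<n. deg n E v \<noteq> k} \<subseteq> {E \<in> space M. \<mu> \<le> \<bar>X E - integral\<^sup>L M X\<bar>}"
    proof -
      have X0: "X E = 0" if "\<forall>v<n. deg n E v \<noteq> k" for E using that by (simp add: X_def A_def indicator_def)
      have sp: "space M = UNIV" by (simp add: M_def)
      show ?thesis using mupos X0 by (auto simp: EX sp)
    qed
    then show ?thesis unfolding M_def by (intro measure_pmf.finite_measure_mono) auto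
  qed
  also have "\<dots> \<le> integral\<^sup>L M (\<lambda>E. (X E - integral\<^sup>L M X)^2) / \<mu>^2"
    unfolding M_def
    by (rule prob_space.Chebyshev_inequality[OF measure_pmf.prob_space_axioms _ intX2[unfolded M_def] mupos]) simp
  also have "\<dots> = (\<mu> + real n * (real n - 1) * dnkl G n k k - \<mu>^2) / \<mu>^2" using var EX by simp
  also have "\<dots> = 1 / \<mu> + (real n - 1) / real n * (dnkl G n k k / (dnk G n k)^2) - 1"
    using mupos n pos by (simp add: \<mu>_def field_simps power2_eq_square)
  also have "\<dots> \<le> 1 / \<mu> + dnkl G n k k / (dnk G n k)^2 - 1"
  proof -
    have "(real n - 1) / real n \<le> 1" using n by simp
    moreover have "dnkl G n k k / (dnk G n k)^2 \<ge> 0" by (simp add: dnkl_nonneg)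
    ultimately have "(real n - 1) / real n * (dnkl G n k k / (dnk G n k)^2) \<le> dnkl G n k k / (dnk G n k)^2"
      using n by (intro mult_left_le_one_le) auto
    then show ?thesis by linarith
  qed
  finally show ?thesis by (simp add: \<mu>_def)
qed



lemma exp_ln_tendsto0:
  assumes "e < 0"
  shows "((\<lambda>n. exp (e * ln (real n))) \<longlongrightarrow> 0) sequentially"
proof -
  have "((\<lambda>n. real n powr e) \<longlongrightarrow> 0) sequentially"
    by (rule tendsto_neg_powr[OF assms filterlim_real_sequentially])
  moreover have "eventually (\<lambda>n. real n powr e = exp (e * ln (real n))) sequentially"
    using eventually_gt_at_top[of 0] by eventually_elim (simp add: powr_def)
  ultimately show ?thesis by (rule Lim_transform_eventually)
qed

lemma ev_ln:
  assumes "\<gamma> > 0"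
  shows "eventually (\<lambda>n. T \<le> \<gamma> * ln (real n)) sequentially"
proof -
  have "filterlim (\<lambda>n. \<gamma> * ln (real n)) at_top sequentially"
    by (rule filterlim_tendsto_pos_mult_at_top[OF tendsto_const assms])
       (rule filterlim_compose[OF ln_at_top filterlim_real_sequentially])
  then show ?thesis by (simp add: filterlim_at_top)
qed

lemma dbar_est:
  fixes dbar :: "nat \<Rightarrow> real"
  assumes q: "0 < q" "q < 1"
    and dbar_pos: "eventually (\<lambda>k. dbar k > 0) at_top"
    and dbar_log: "(\<lambda>k. ln (dbar k)) \<sim>[at_top] (\<lambda>k. real k * ln q)"
    and d: "\<delta> > 0"
  shows "eventually (\<lambda>k. dbar k > 0 \<and> exp (-(1+\<delta>) * ln (1/q) * real k) \<le> dbar k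
            \<and> dbar k \<le> exp (-(1-\<delta>) * ln (1/q) * real k)) at_top"
proof -
  define L where "L = ln (1/q)"
  have L: "L > 0" "ln q = - L" using q by (auto simp: L_def ln_div)
  have "((\<lambda>k. if ln (dbar k) = 0 \<and> real k * ln q = 0 then 1 else ln (dbar k) / (real k * ln q)) \<longlongrightarrow> 1) at_top"
    using asymp_equivD[OF dbar_log] .
  then have "eventually (\<lambda>k. dist (if ln (dbar k) = 0 \<and> real k * ln q = 0 then 1 else ln (dbar k) / (real k * ln q)) 1 < \<delta>) at_top"
    using d by (rule tendstoD)
  with dbar_pos eventually_gt_at_top[of 0]
  show ?thesis
  proof eventually_elim
    case (elim k)
    have kq: "real k * ln q = - (L * real k)" using L by simp
    have kL: "L * real k > 0" using L elim by simp
    have nz: "real k * ln q \<noteq> 0" using kL kq by linarith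
    from elim(3) have "\<bar>ln (dbar k) / (real k * ln q) - 1\<bar> < \<delta>"
      using nz by (simp add: dist_real_def)
    then have "\<bar>ln (dbar k) / (- (L * real k)) - 1\<bar> < \<delta>" by (simp only: kq)
    then have "\<bar>- ln (dbar k) - L * real k\<bar> < \<delta> * (L * real k)"
    proof -
      have "ln (dbar k) / (- (L * real k)) - 1 = (- ln (dbar k) - L * real k) / (L * real k)"
        using kL L elim by (simp add: divide_simps)
      then have "\<bar>- ln (dbar k) - L * real k\<bar> / (L * real k) < \<delta>"
        using \<open>\<bar>ln (dbar k) / (- (L * real k)) - 1\<bar> < \<delta>\<close> kL by (simp add: abs_divide)
      then show ?thesis using kL by (simp add: pos_divide_less_eq)
    qed
    then have lo: "-(1+\<delta>) * L * real k \<le> ln (dbar k)" and hi: "ln (dbar k) \<le> -(1-\<delta>) * L * real k"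
      by (auto simp: algebra_simps abs_less_iff)
    have "exp (-(1+\<delta>) * L * real k) \<le> dbar k" using exp_le_cancel_iff[THEN iffD2, OF lo] elim(1) by simp
    moreover have "dbar k \<le> exp (-(1-\<delta>) * L * real k)" using exp_le_cancel_iff[THEN iffD2, OF hi] elim(1) by simp
    ultimately show ?case using elim(1) by (simp add: L_def)
  qed
qed

lemma bound_norm:
  assumes "\<exists>qb B. qb < 1 \<and> (\<forall>n\<ge>1. \<forall>k\<ge>1. \<forall>l\<ge>1.
                 \<bar>dnk G n k\<bar> \<le> B * qb ^ k \<and> \<bar>dnkl G n k l\<bar> \<le> B * qb ^ (k + l))"
  shows "\<exists>p B. 0 < p \<and> p < 1 \<and> B \<ge> 0 \<and> (\<forall>n\<ge>1. \<forall>k\<ge>1. dnk G n k \<le> B * p ^ k)"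
proof -
  obtain qb B where qb: "qb < 1" and h: "\<And>n k. n \<ge> 1 \<Longrightarrow> k \<ge> 1 \<Longrightarrow> \<bar>dnk G n k\<bar> \<le> B * qb ^ k"
    using assms by (metis order_refl)
  have B1: "B * qb \<ge> 0" using h[of 1 1] by simp
  have B2: "B * qb^2 \<ge> 0" using h[of 1 2] by simp
  show ?thesis
  proof (cases "qb > 0")
    case True
    have B0: "B \<ge> 0" using B1 True by (simp add: zero_le_mult_iff)
    show ?thesis
    proof (intro exI conjI allI impI)
      show "0 < max qb (1/2)" "max qb (1/2) < 1" "B \<ge> 0" using qb B0 by auto
      fix n k :: nat assume "n \<ge> 1" "k \<ge> 1"
      have "dnk G n k \<le> B * qb ^ k" using h[OF \<open>n \<ge> 1\<close> \<open>k \<ge> 1\<close>] by simp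
      also have "\<dots> \<le> B * max qb (1/2) ^ k"
        using True B0 by (intro mult_left_mono power_mono) auto
      finally show "dnk G n k \<le> B * max qb (1/2) ^ k" .
    qed
  next
    case False
    have "B * qb = 0"
    proof (cases "qb = 0")
      case False
      then have "qb < 0" using \<open>\<not> qb > 0\<close> by simp
      have "(B * qb) * qb \<ge> 0" using B2 by (simp add: power2_eq_square mult.assoc)
      then have "B * qb \<le> 0" using \<open>qb < 0\<close> by (simp add: zero_le_mult_iff)
      then show ?thesis using B1 by simp
    qed simp
    show ?thesis
    proof (intro exI conjI allI impI)
      show "0 < (1/2::real)" "(1/2::real) < 1" "(0::real) \<ge> 0" by auto
      fix n k :: nat assume "n \<ge> 1" "k \<ge> 1"
      then obtain j where k: "k = Suc j" by (cases k) auto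
      have "dnk G n k \<le> B * qb ^ k" using h[OF \<open>n \<ge> 1\<close> \<open>k \<ge> 1\<close>] by simp
      also have "\<dots> = (B * qb) * qb ^ j" by (simp add: k)
      also have "\<dots> = 0" using \<open>B * qb = 0\<close> by simp
      finally show "dnk G n k \<le> 0 * (1/2) ^ k" by simp
    qed
  qed
qed



lemma tail_sum_bound:
  fixes f :: "nat \<Rightarrow> real"
  assumes f0: "\<And>k. f k \<ge> 0"
    and mid: "\<And>k. m \<le> k \<Longrightarrow> k \<le> M \<Longrightarrow> f k \<le> c * r ^ k"
    and tl: "\<And>k. Suc M \<le> k \<Longrightarrow> f k \<le> B * p ^ k"
    and r: "0 \<le> r" "r < 1" and p: "0 \<le> p" "p < 1" and c: "c \<ge> 0" and B: "B \<ge> 0"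
  shows "(\<Sum>k\<in>{m..n}. f k) \<le> c * (r ^ m / (1 - r)) + B * (p ^ Suc M / (1 - p))"
proof -
  have "(\<Sum>k\<in>{m..n}. f k) \<le> (\<Sum>k\<in>{m..M} \<union> {Suc M..n}. f k)"
    by (rule sum_mono2) (auto simp: f0)
  also have "\<dots> = (\<Sum>k\<in>{m..M}. f k) + (\<Sum>k\<in>{Suc M..n}. f k)"
    by (rule sum.union_disjoint) auto
  also have "(\<Sum>k\<in>{m..M}. f k) \<le> (\<Sum>k\<in>{m..M}. c * r ^ k)" by (rule sum_mono) (auto intro: mid)
  also have "\<dots> = c * (\<Sum>k\<in>{m..M}. r ^ k)" by (simp add: sum_distrib_left)
  also have "\<dots> \<le> c * (r ^ m / (1 - r))" by (intro mult_left_mono sum_pow_le r c)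
  also have "(\<Sum>k\<in>{Suc M..n}. f k) \<le> (\<Sum>k\<in>{Suc M..n}. B * p ^ k)" by (rule sum_mono) (auto intro: tl)
  also have "\<dots> = B * (\<Sum>k\<in>{Suc M..n}. p ^ k)" by (simp add: sum_distrib_left)
  also have "\<dots> \<le> B * (p ^ Suc M / (1 - p))" by (intro mult_left_mono sum_pow_le p B)
  finally show ?thesis by simp
qed



lemma upper_tail:
  fixes G :: "nat \<Rightarrow> (nat \<Rightarrow> nat \<Rightarrow> bool) pmf" and dbar :: "nat \<Rightarrow> real"
  assumes q: "0 < q" "q < 1"
    and dbar_pos: "eventually (\<lambda>k. dbar k > 0) at_top"
    and dbar_log: "(\<lambda>k. ln (dbar k)) \<sim>[at_top] (\<lambda>k. real k * ln q)"
    and unif: "\<And>C \<epsilon>. C > 0 \<Longrightarrow> \<epsilon> > 0 \<Longrightarrow> \<exists>N K. \<forall>n\<ge>N. \<forall>k l.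
                 K \<le> k \<and> real k \<le> C * ln (real n) \<and> K \<le> l \<and> real l \<le> C * ln (real n) \<longrightarrow>
                 \<bar>dnk G n k - dbar k\<bar> \<le> \<epsilon> * dbar k \<and>
                 \<bar>dnkl G n k l - dbar k * dbar l\<bar> \<le> \<epsilon> * (dbar k * dbar l)"
    and p: "0 < p" "p < 1" and B: "B \<ge> 0" and pb: "\<forall>n\<ge>1. \<forall>k\<ge>1. dnk G n k \<le> B * p ^ k"
    and s: "s \<ge> 0" and g: "\<gamma> > 0" "\<gamma> * ln (1/q) > 1 + s"
  shows "((\<lambda>n. exp (s * ln (real n)) * measure_pmf.prob (G n) {E. \<gamma> * ln (real n) \<le> real (max_deg n E)})
           \<longlongrightarrow> 0) sequentially"
proof -
  define L where "L = ln (1/q)"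
  have L: "L > 0" using q by (simp add: L_def)
  have gL: "\<gamma> * L > 1 + s" using g by (simp add: L_def)
  define \<delta> where "\<delta> = (\<gamma>*L - 1 - s) / (2*\<gamma>*L)"
  have \<delta>: "\<delta> > 0" "\<delta> < 1" using gL g L s by (auto simp: \<delta>_def field_simps)
  define e1 where "e1 = 1 + s - (1-\<delta>)*L*\<gamma>"
  have "(1-\<delta>)*L*\<gamma> = (\<gamma>*L + 1 + s) / 2" using g L by (simp add: \<delta>_def field_simps)
  then have e1: "e1 < 0" using gL by (simp add: e1_def)
  define Lp where "Lp = ln (1/p)"
  have Lp: "Lp > 0" "ln p = - Lp" using p by (auto simp: Lp_def ln_div)
  define C where "C = max \<gamma> ((s+2)/Lp)"
  have C: "C > 0" "C * Lp \<ge> s + 2" using g Lp s by (auto simp: C_def max_def field_simps)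
  define e2 where "e2 = 1 + s - C * Lp"
  have e2: "e2 < 0" using C by (simp add: e2_def)
  define r where "r = exp (-(1-\<delta>)*L)"
  have r: "0 < r" "r < 1" using \<delta> L by (auto simp: r_def mult_neg_pos)
  obtain N K where NK0: "\<forall>n\<ge>N. \<forall>k l.
                 K \<le> k \<and> real k \<le> C * ln (real n) \<and> K \<le> l \<and> real l \<le> C * ln (real n) \<longrightarrow>
                 \<bar>dnk G n k - dbar k\<bar> \<le> 1 * dbar k \<and>
                 \<bar>dnkl G n k l - dbar k * dbar l\<bar> \<le> 1 * (dbar k * dbar l)"
    using unif[OF C(1) zero_less_one] by blast
  have NK: "\<And>n k l. n \<ge> N \<Longrightarrow> K \<le> k \<Longrightarrow> real k \<le> C * ln (real n) \<Longrightarrow> K \<le> l \<Longrightarrow> real l \<le> C * ln (real n) \<Longrightarrow>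
                 \<bar>dnk G n k - dbar k\<bar> \<le> 1 * dbar k"
    using NK0 by blast
  obtain K2 where K2: "\<And>k. k \<ge> K2 \<Longrightarrow> dbar k > 0 \<and> exp (-(1+\<delta>) * L * real k) \<le> dbar k
            \<and> dbar k \<le> exp (-(1-\<delta>) * L * real k)"
    using dbar_est[OF q dbar_pos dbar_log \<delta>(1)] unfolding eventually_at_top_linorder L_def by blast
  define F where "F n = 2/(1-r) * exp (e1 * ln (real n)) + B/(1-p) * exp (e2 * ln (real n))" for n :: nat
  have "((\<lambda>n. 2/(1-r) * exp (e1 * ln (real n)) + B/(1-p) * exp (e2 * ln (real n))) \<longlongrightarrow> 2/(1-r) * 0 + B/(1-p) * 0) sequentially"
    by (intro tendsto_add tendsto_mult tendsto_const exp_ln_tendsto0 e1 e2)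
  then have F0: "F \<longlonglongrightarrow> 0" by (simp add: F_def[abs_def])
  define lhs where "lhs n = exp (s * ln (real n)) * measure_pmf.prob (G n) {E. \<gamma> * ln (real n) \<le> real (max_deg n E)}" for n
  have ev: "eventually (\<lambda>n. lhs n \<le> F n) sequentially"
    using eventually_ge_at_top[of "max N 2"] ev_ln[OF g(1), of "real (max K (max K2 1))"]
  proof eventually_elim
    case (elim n)
    have n: "n \<ge> N" "n \<ge> 2" using elim by auto
    have lnpos: "ln (real n) > 0" using n by simp
    define m where "m = nat \<lceil>\<gamma> * ln (real n)\<rceil>"
    define M where "M = nat \<lfloor>C * ln (real n)\<rfloor>"
    have setEq: "{E. \<gamma> * ln (real n) \<le> real (max_deg n E)} = {E. m \<le> max_deg n E}"
      by (simp add: m_def nat_ceiling_le_eq)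
    have mge: "real m \<ge> \<gamma> * ln (real n)" unfolding m_def by linarith
    then have mK: "m \<ge> K" "m \<ge> K2" "m \<ge> 1" using elim by auto
    have Mle: "real M \<le> C * ln (real n)" unfolding M_def using C lnpos by (intro of_nat_floor) simp
    have SM: "real (Suc M) \<ge> C * ln (real n)" unfolding M_def using C lnpos by simp linarith
    have sumb: "(\<Sum>k\<in>{m..n}. dnk G n k) \<le> 2 * (r ^ m / (1 - r)) + B * (p ^ Suc M / (1 - p))"
    proof (rule tail_sum_bound)
      fix k assume k: "m \<le> k" "k \<le> M"
      have "real k \<le> real M" using k by simp
      then have "real k \<le> C * ln (real n)" using Mle by linarith
      then have "\<bar>dnk G n k - dbar k\<bar> \<le> 1 * dbar k" using NK[OF n(1), of k k] k mK by auto
      then have "dnk G n k \<le> 2 * dbar k" by simp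
      also have "\<dots> \<le> 2 * exp (-(1-\<delta>) * L * real k)" using K2[of k] k mK by auto
      also have "exp (-(1-\<delta>) * L * real k) = r ^ k" unfolding r_def
        by (subst exp_of_nat_mult[symmetric]) (simp add: algebra_simps)
      finally show "dnk G n k \<le> 2 * r ^ k" .
    next
      fix k assume "Suc M \<le> k"
      then show "dnk G n k \<le> B * p ^ k" using pb n by auto
    qed (use r p B dnk_nonneg in auto)
    have rm: "r ^ m \<le> exp (-(1-\<delta>) * L * \<gamma> * ln (real n))"
    proof -
      have "r ^ m = exp (real m * (-(1-\<delta>) * L))" unfolding r_def by (simp add: exp_of_nat_mult)
      also have "\<dots> \<le> exp (\<gamma> * ln (real n) * (-(1-\<delta>) * L))"
        using mge \<delta> L by (intro exp_mono mult_right_mono_neg) (auto simp: mult_nonpos_nonneg)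
      finally show ?thesis by (simp add: algebra_simps)
    qed
    have pM: "p ^ Suc M \<le> exp (- C * Lp * ln (real n))"
    proof -
      have "p ^ Suc M = exp (real (Suc M) * ln p)" using p by (simp only: exp_of_nat_mult) simp
      also have "\<dots> \<le> exp (C * ln (real n) * ln p)"
        using SM Lp by (intro exp_mono mult_right_mono_neg) auto
      finally show ?thesis using Lp by (simp add: algebra_simps)
    qed
    have "measure_pmf.prob (G n) {E. \<gamma> * ln (real n) \<le> real (max_deg n E)}
          \<le> (\<Sum>k\<in>{m..n}. real n * dnk G n k)"
      unfolding setEq using n by (intro union_bound) auto
    also have "\<dots> = real n * (\<Sum>k\<in>{m..n}. dnk G n k)" by (simp add: sum_distrib_left)
    also have "\<dots> \<le> real n * (2 * (exp (-(1-\<delta>) * L * \<gamma> * ln (real n)) / (1 - r))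
                 + B * (exp (- C * Lp * ln (real n)) / (1 - p)))"
    proof -
      have a1: "2 * (r ^ m / (1 - r)) \<le> 2 * (exp (-(1-\<delta>) * L * \<gamma> * ln (real n)) / (1 - r))"
        using rm r by (intro mult_left_mono divide_right_mono) auto
      have a2: "B * (p ^ Suc M / (1 - p)) \<le> B * (exp (- C * Lp * ln (real n)) / (1 - p))"
        using pM p B by (intro mult_left_mono divide_right_mono) auto
      show ?thesis using order.trans[OF sumb add_mono[OF a1 a2]] by (intro mult_left_mono) simp_all
    qed
    finally have P: "measure_pmf.prob (G n) {E. \<gamma> * ln (real n) \<le> real (max_deg n E)} \<le> \<dots>" .
    have "lhs n \<le> exp (s * ln (real n)) * (real n * (2 * (exp (-(1-\<delta>) * L * \<gamma> * ln (real n)) / (1 - r))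
                 + B * (exp (- C * Lp * ln (real n)) / (1 - p))))"
      unfolding lhs_def by (intro mult_left_mono P) simp
    also have "\<dots> = F n"
    proof -
      have rn: "real n = exp (ln (real n))" using n by simp
      have "exp (s * ln (real n)) * (real n * (2 * (exp (-(1-\<delta>) * L * \<gamma> * ln (real n)) / (1 - r))
                 + B * (exp (- C * Lp * ln (real n)) / (1 - p))))
         = 2/(1-r) * (exp (s * ln (real n)) * exp (ln (real n)) * exp (-(1-\<delta>) * L * \<gamma> * ln (real n)))
           + B/(1-p) * (exp (s * ln (real n)) * exp (ln (real n)) * exp (- C * Lp * ln (real n)))"
        by (subst (1) rn) (simp add: algebra_simps)
      also have "\<dots> = F n" unfolding F_def e1_def e2_def
        by (simp add: exp_add[symmetric] algebra_simps)
      finally show ?thesis .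
    qed
    finally show ?case .
  qed
  have ev0: "eventually (\<lambda>n. 0 \<le> lhs n) sequentially" by (simp add: lhs_def)
  show ?thesis
    using tendsto_sandwich[OF ev0 ev tendsto_const F0] by (simp add: lhs_def[abs_def])
qed



lemma eps_ineq:
  fixes e \<eta> :: real
  assumes "0 < \<eta>" "0 \<le> e" "e \<le> 1/4" "e \<le> \<eta>/18"
  shows "(1 + e) / (1 - e)^2 - 1 \<le> \<eta>/3"
proof -
  have sq: "(1 - e)^2 \<ge> 1 - 2*e" by (simp add: power2_eq_square algebra_simps)
  have f1: "\<eta> * e \<le> \<eta> * (1/4)" using assms by (intro mult_left_mono) auto
  have f2: "(1+\<eta>/3)*(1-2*e) = 1 - 2*e + \<eta>/3 - 2*(\<eta>*e)/3" by (simp add: algebra_simps)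
  have "(1+\<eta>/3)*(1-2*e) \<ge> 1 + e" unfolding f2 using f1 assms by linarith
  also have "(1+\<eta>/3)*(1-2*e) \<le> (1+\<eta>/3)*(1-e)^2" using sq assms by (intro mult_left_mono) auto
  finally have "1 + e \<le> (1+\<eta>/3)*(1-e)^2" .
  moreover have "(1-e)^2 > 0" using assms by simp
  ultimately show ?thesis by (simp add: field_simps)
qed

lemma lower_tail:
  fixes G :: "nat \<Rightarrow> (nat \<Rightarrow> nat \<Rightarrow> bool) pmf" and dbar :: "nat \<Rightarrow> real"
  assumes q: "0 < q" "q < 1"
    and dbar_pos: "eventually (\<lambda>k. dbar k > 0) at_top"
    and dbar_log: "(\<lambda>k. ln (dbar k)) \<sim>[at_top] (\<lambda>k. real k * ln q)"
    and unif: "\<And>C \<epsilon>. C > 0 \<Longrightarrow> \<epsilon> > 0 \<Longrightarrow> \<exists>N K. \<forall>n\<ge>N. \<forall>k l.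
                 K \<le> k \<and> real k \<le> C * ln (real n) \<and> K \<le> l \<and> real l \<le> C * ln (real n) \<longrightarrow>
                 \<bar>dnk G n k - dbar k\<bar> \<le> \<epsilon> * dbar k \<and>
                 \<bar>dnkl G n k l - dbar k * dbar l\<bar> \<le> \<epsilon> * (dbar k * dbar l)"
    and b: "\<beta> > 0" "\<beta> * ln (1/q) < 1"
  shows "((\<lambda>n. measure_pmf.prob (G n) {E. real (max_deg n E) < \<beta> * ln (real n)}) \<longlongrightarrow> 0) sequentially"
proof (rule tendstoI)
  fix \<eta> :: real assume \<eta>: "\<eta> > 0"
  define L where "L = ln (1/q)"
  have L: "L > 0" using q by (simp add: L_def)
  have bL: "\<beta> * L < 1" using b by (simp add: L_def)
  define \<delta> where "\<delta> = (1 - \<beta>*L) / (2*\<beta>*L)"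
  have \<delta>: "\<delta> > 0" using bL b L by (auto simp: \<delta>_def field_simps)
  define \<theta> where "\<theta> = 1 - (1+\<delta>)*\<beta>*L"
  have "(1+\<delta>)*\<beta>*L = (1 + \<beta>*L)/2" using b L by (simp add: \<delta>_def field_simps)
  then have \<theta>: "\<theta> > 0" using bL by (simp add: \<theta>_def)
  define e where "e = min (1/4) (\<eta>/18)"
  have e: "e > 0" "e \<le> 1/4" "e \<le> \<eta>/18" using \<eta> by (auto simp: e_def)
  define C where "C = \<beta> + 1"
  have C: "C > 0" using b by (simp add: C_def)
  obtain N K where NK0: "\<forall>n\<ge>N. \<forall>k l.
                 K \<le> k \<and> real k \<le> C * ln (real n) \<and> K \<le> l \<and> real l \<le> C * ln (real n) \<longrightarrow>
                 \<bar>dnk G n k - dbar k\<bar> \<le> e * dbar k \<and>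
                 \<bar>dnkl G n k l - dbar k * dbar l\<bar> \<le> e * (dbar k * dbar l)"
    using unif[OF C e(1)] by blast
  obtain K2 where K2: "\<And>k. k \<ge> K2 \<Longrightarrow> dbar k > 0 \<and> exp (-(1+\<delta>) * L * real k) \<le> dbar k
            \<and> dbar k \<le> exp (-(1-\<delta>) * L * real k)"
    using dbar_est[OF q dbar_pos dbar_log \<delta>] unfolding eventually_at_top_linorder L_def by blast
  define c0 where "c0 = 4/3 * exp ((1+\<delta>)*L)"
  have "((\<lambda>n. c0 * exp (-\<theta> * ln (real n))) \<longlongrightarrow> c0 * 0) sequentially"
    using \<theta> by (intro tendsto_mult tendsto_const exp_ln_tendsto0) simp
  then have evc: "eventually (\<lambda>n. c0 * exp (-\<theta> * ln (real n)) < \<eta>/2) sequentially"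
    using \<eta> by (intro order_tendstoD(2)) auto
  show "eventually (\<lambda>n. dist (measure_pmf.prob (G n) {E. real (max_deg n E) < \<beta> * ln (real n)}) 0 < \<eta>) sequentially"
    using eventually_ge_at_top[of "max N 3"] ev_ln[OF b(1), of "real (max K (max K2 1))"]
      ev_ln[OF zero_less_one, of 1] evc
  proof eventually_elim
    case (elim n)
    have n: "n \<ge> N" "n \<ge> 2" using elim by auto
    have ln1: "ln (real n) \<ge> 1" using elim by simp
    define k where "k = nat \<lceil>\<beta> * ln (real n)\<rceil>"
    have kge: "real k \<ge> \<beta> * ln (real n)" unfolding k_def by linarith
    have x0: "\<beta> * ln (real n) \<ge> 0" using b ln1 by simp
    have "real k = real_of_int \<lceil>\<beta> * ln (real n)\<rceil>" unfolding k_def using x0 by simp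
    then have kle: "real k \<le> \<beta> * ln (real n) + 1" using of_int_ceiling_le_add_one[of "\<beta> * ln (real n)"] by linarith
    have kC: "real k \<le> C * ln (real n)" using kle ln1 by (simp add: C_def algebra_simps)
    have kK: "k \<ge> K" "k \<ge> K2" using kge elim by auto
    have NK: "\<bar>dnk G n k - dbar k\<bar> \<le> e * dbar k" "\<bar>dnkl G n k k - dbar k * dbar k\<bar> \<le> e * (dbar k * dbar k)"
      using NK0 n kK kC by auto
    have dpos: "dbar k > 0" and dlow: "exp (-(1+\<delta>) * L * real k) \<le> dbar k" using K2[OF kK(2)] by auto
    have dnk_low: "dnk G n k \<ge> (1 - e) * dbar k" using NK(1) by (simp add: algebra_simps abs_le_iff)
    have "(1 - e) * dbar k > 0" using e dpos by simp
    then have dnk_pos: "dnk G n k > 0" using dnk_low by linarith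
    have dnkl_up: "dnkl G n k k \<le> (1 + e) * (dbar k * dbar k)" using NK(2) by (simp add: algebra_simps abs_le_iff)
    have sub: "{E. real (max_deg n E) < \<beta> * ln (real n)} \<subseteq> {E. \<forall>v<n. deg n E v \<noteq> k}"
    proof (intro subsetI CollectI allI impI notI)
      fix E v assume A: "E \<in> {E. real (max_deg n E) < \<beta> * ln (real n)}" "v < n" "deg n E v = k"
      have "real (deg n E v) \<le> real (max_deg n E)" using max_deg_ge[OF A(2)] by simp
      then show False using A kge by simp
    qed
    have "measure_pmf.prob (G n) {E. real (max_deg n E) < \<beta> * ln (real n)}
        \<le> measure_pmf.prob (G n) {E. \<forall>v<n. deg n E v \<noteq> k}"
      by (rule measure_pmf.finite_measure_mono[OF sub]) simp
    also have "\<dots> \<le> 1 / (real n * dnk G n k) + dnkl G n k k / (dnk G n k)^2 - 1"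
      by (rule second_moment[OF n(2) dnk_pos])
    also have "\<dots> < \<eta>/2 + \<eta>/3"
    proof -
      have "dnkl G n k k / (dnk G n k)^2 \<le> (1 + e) * (dbar k * dbar k) / ((1 - e) * dbar k)^2"
      proof (rule frac_le)
        show "0 \<le> (1 + e) * (dbar k * dbar k)" using e dpos by simp
        show "dnkl G n k k \<le> (1 + e) * (dbar k * dbar k)" by (rule dnkl_up)
        show "0 < ((1 - e) * dbar k)^2" using e dpos by simp
        show "((1 - e) * dbar k)^2 \<le> (dnk G n k)^2" using dnk_low e dpos by (intro power_mono) auto
      qed
      also have "\<dots> = (1 + e) / (1 - e)^2"
      proof -
        have "((1-e)*dbar k)^2 = (1-e)^2 * (dbar k * dbar k)" by (simp add: power_mult_distrib power2_eq_square)
        moreover have "dbar k * dbar k \<noteq> 0" using dpos by simp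
        ultimately show ?thesis by simp
      qed
      finally have A: "dnkl G n k k / (dnk G n k)^2 - 1 \<le> \<eta>/3" using eps_ineq[OF \<eta> _ e(2,3)] e by linarith
      have "real n * dnk G n k \<ge> real n * ((1 - e) * exp (-(1+\<delta>) * L * real k))"
        using dnk_low dlow e by (intro mult_left_mono order.trans[OF _ dnk_low] mult_left_mono) auto
      also have "real n * ((1 - e) * exp (-(1+\<delta>) * L * real k)) \<ge> real n * (3/4 * exp (-(1+\<delta>) * L * (\<beta> * ln (real n) + 1)))"
      proof (intro mult_left_mono mult_mono)
        show "exp (-(1+\<delta>) * L * (\<beta> * ln (real n) + 1)) \<le> exp (-(1+\<delta>) * L * real k)"
        proof -
          have "(1+\<delta>)*L * real k \<le> (1+\<delta>)*L*(\<beta> * ln (real n) + 1)" using kle \<delta> L by (intro mult_left_mono) auto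
          then show ?thesis by (intro exp_mono) (simp only: mult_minus_left; linarith)
        qed
      qed (use e in auto)
      also have "real n * (3/4 * exp (-(1+\<delta>) * L * (\<beta> * ln (real n) + 1))) = exp (\<theta> * ln (real n)) / c0"
      proof -
        have rn: "real n = exp (ln (real n))" using n by simp
        show ?thesis unfolding c0_def \<theta>_def
          by (subst (1) rn) (simp add: exp_add[symmetric] exp_minus field_simps exp_diff)
      qed
      finally have nd: "real n * dnk G n k \<ge> exp (\<theta> * ln (real n)) / c0" .
      have c0p: "c0 > 0" by (simp add: c0_def)
      have "1 / (real n * dnk G n k) \<le> 1 / (exp (\<theta> * ln (real n)) / c0)"
        using nd c0p dnk_pos n by (intro divide_left_mono) auto
      also have "\<dots> = c0 * exp (-\<theta> * ln (real n))" by (simp add: exp_minus field_simps)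
      finally have B: "1 / (real n * dnk G n k) < \<eta>/2" using elim(4) by linarith
      show ?thesis using A B by linarith
    qed
    also have "\<dots> < \<eta>" using \<eta> by simp
    finally show ?case by (simp add: dist_real_def)
  qed
qed



lemma exp_lin:
  fixes A B' :: "'a set"
  shows "measure_pmf.expectation p (\<lambda>x. a + b * indicator A x + c * indicator B' x :: real)
         = a + b * measure_pmf.prob p A + c * measure_pmf.prob p B'"
proof -
  have "measure_pmf.expectation p (\<lambda>x. a + b * indicator A x + c * indicator B' x :: real)
      = measure_pmf.expectation p (\<lambda>x. a + b * indicator A x) + measure_pmf.expectation p (\<lambda>x. c * indicator B' x :: real)"
    by (rule Bochner_Integration.integral_add; rule pmf_int_bdd[where c="\<bar>a\<bar>+\<bar>b\<bar>+\<bar>c\<bar>"]; auto simp: indicator_def)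
  also have "measure_pmf.expectation p (\<lambda>x. a + b * indicator A x :: real)
      = measure_pmf.expectation p (\<lambda>x. a) + measure_pmf.expectation p (\<lambda>x. b * indicator A x :: real)"
    by (rule Bochner_Integration.integral_add; rule pmf_int_bdd[where c="\<bar>a\<bar>+\<bar>b\<bar>"]; auto simp: indicator_def)
  finally have "measure_pmf.expectation p (\<lambda>x. a + b * indicator A x + c * indicator B' x :: real) = measure_pmf.expectation p (\<lambda>x. a) + measure_pmf.expectation p (\<lambda>x. b * indicator A x :: real) + measure_pmf.expectation p (\<lambda>x. c * indicator B' x :: real)" .
  moreover have iI: "integrable (measure_pmf p) (indicator S :: _ \<Rightarrow> real)" for S :: "'a set"
    by (rule pmf_int_bdd[where c=1]) (auto simp: indicator_def)
  ultimately show ?thesis by (simp add: iI)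
qed

theorem theorem1:
  fixes G :: "nat \<Rightarrow> (nat \<Rightarrow> nat \<Rightarrow> bool) pmf"
    and dbar :: "nat \<Rightarrow> real" and q :: real
  assumes graphs: "\<And>n E. n \<ge> 1 \<Longrightarrow> E \<in> set_pmf (G n) \<Longrightarrow> simple_graph_on n E"
    and q: "0 < q" "q < 1"
    and dbar_nonneg: "\<And>k. k \<ge> 1 \<Longrightarrow> dbar k \<ge> 0"
    and dbar_distr: "(\<lambda>k. dbar (Suc k)) sums 1"
    and dbar_pos: "eventually (\<lambda>k. dbar k > 0) at_top"
    and dbar_log: "(\<lambda>k. ln (dbar k)) \<sim>[at_top] (\<lambda>k. real k * ln q)"
    and unif: "\<And>C \<epsilon>. C > 0 \<Longrightarrow> \<epsilon> > 0 \<Longrightarrow> \<exists>N K. \<forall>n\<ge>N. \<forall>k l.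
                 K \<le> k \<and> real k \<le> C * ln (real n) \<and> K \<le> l \<and> real l \<le> C * ln (real n) \<longrightarrow>
                 \<bar>dnk G n k - dbar k\<bar> \<le> \<epsilon> * dbar k \<and>
                 \<bar>dnkl G n k l - dbar k * dbar l\<bar> \<le> \<epsilon> * (dbar k * dbar l)"
    and bound: "\<exists>qb B. qb < 1 \<and> (\<forall>n\<ge>1. \<forall>k\<ge>1. \<forall>l\<ge>1.
                 \<bar>dnk G n k\<bar> \<le> B * qb ^ k \<and> \<bar>dnkl G n k l\<bar> \<le> B * qb ^ (k + l))"
  shows "(\<forall>\<epsilon>>0. (\<lambda>n. measure_pmf.prob (G n)
            {E. \<bar>real (max_deg n E) / ln (real n) - 1 / ln (1 / q)\<bar> > \<epsilon>}) \<longlonglongrightarrow> 0) \<and>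
         ((\<lambda>n. measure_pmf.expectation (G n) (\<lambda>E. real (max_deg n E)))
            \<sim>[at_top] (\<lambda>n. ln (real n) / ln (1 / q)))"
proof -
  define L where "L = ln (1/q)"
  have L: "L > 0" using q by (simp add: L_def)
  define a where "a = 1/L"
  have a: "a > 0" using L by (simp add: a_def)
  have aL: "a * L = 1" using L by (simp add: a_def)
  have ia: "1 / ln (1/q) = a" by (simp add: a_def L_def)
  obtain p B where pB: "0 < p" "p < 1" "B \<ge> 0" "\<forall>n\<ge>1. \<forall>k\<ge>1. dnk G n k \<le> B * p ^ k"
    using bound_norm[OF bound] by blast
  have UTs: "((\<lambda>n. exp (s * ln (real n)) * measure_pmf.prob (G n) {E. \<gamma> * ln (real n) \<le> real (max_deg n E)})
           \<longlongrightarrow> 0) sequentially" if "\<gamma> > (1 + s) * a" "s \<ge> 0" for \<gamma> s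
  proof (rule upper_tail[OF q dbar_pos dbar_log unif pB])
    show "s \<ge> 0" by fact
    show "\<gamma> > 0" using that a by (smt (verit) mult_pos_pos)
    have "\<gamma> * L > (1 + s) * a * L" using that L by (intro mult_strict_right_mono) auto
    then show "\<gamma> * ln (1/q) > 1 + s" using aL by (simp add: L_def[symmetric] mult.assoc)
  qed
  have UT0: "((\<lambda>n. measure_pmf.prob (G n) {E. \<gamma> * ln (real n) \<le> real (max_deg n E)}) \<longlongrightarrow> 0) sequentially"
    if "\<gamma> > a" for \<gamma>
    using UTs[of 0 \<gamma>] that by simp
  have UT1: "((\<lambda>n. real n * measure_pmf.prob (G n) {E. \<gamma> * ln (real n) \<le> real (max_deg n E)}) \<longlongrightarrow> 0) sequentially"
    if "\<gamma> > 2 * a" for \<gamma>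
  proof -
    have "((\<lambda>n. exp (1 * ln (real n)) * measure_pmf.prob (G n) {E. \<gamma> * ln (real n) \<le> real (max_deg n E)}) \<longlongrightarrow> 0) sequentially"
      using UTs[of 1 \<gamma>] that by simp
    moreover have "eventually (\<lambda>n. exp (1 * ln (real n)) * measure_pmf.prob (G n) {E. \<gamma> * ln (real n) \<le> real (max_deg n E)}
        = real n * measure_pmf.prob (G n) {E. \<gamma> * ln (real n) \<le> real (max_deg n E)}) sequentially"
      using eventually_gt_at_top[of 0] by eventually_elim simp
    ultimately show ?thesis by (rule Lim_transform_eventually)
  qed
  have LT: "((\<lambda>n. measure_pmf.prob (G n) {E. real (max_deg n E) < \<beta> * ln (real n)}) \<longlongrightarrow> 0) sequentially"
    if "0 < \<beta>" "\<beta> < a" for \<beta>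
  proof (rule lower_tail[OF q dbar_pos dbar_log unif \<open>0 < \<beta>\<close>])
    have "\<beta> * L < a * L" using that L by (intro mult_strict_right_mono) auto
    then show "\<beta> * ln (1/q) < 1" using aL by (simp add: L_def[symmetric])
  qed
  have partA: "\<forall>\<epsilon>>0. (\<lambda>n. measure_pmf.prob (G n)
            {E. \<bar>real (max_deg n E) / ln (real n) - 1 / ln (1 / q)\<bar> > \<epsilon>}) \<longlonglongrightarrow> 0"
  proof (intro allI impI)
    fix \<epsilon> :: real assume \<epsilon>: "\<epsilon> > 0"
    define \<beta> where "\<beta> = max (a - \<epsilon>) (a/2)"
    have \<beta>: "0 < \<beta>" "\<beta> < a" "a - \<epsilon> \<le> \<beta>" using a \<epsilon> by (auto simp: \<beta>_def)
    have lim: "((\<lambda>n. measure_pmf.prob (G n) {E. (a + \<epsilon>) * ln (real n) \<le> real (max_deg n E)}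
               + measure_pmf.prob (G n) {E. real (max_deg n E) < \<beta> * ln (real n)}) \<longlongrightarrow> 0 + 0) sequentially"
      using \<epsilon> \<beta> by (intro tendsto_add UT0 LT) auto
    have ev: "eventually (\<lambda>n. measure_pmf.prob (G n)
            {E. \<bar>real (max_deg n E) / ln (real n) - 1 / ln (1 / q)\<bar> > \<epsilon>}
         \<le> measure_pmf.prob (G n) {E. (a + \<epsilon>) * ln (real n) \<le> real (max_deg n E)}
               + measure_pmf.prob (G n) {E. real (max_deg n E) < \<beta> * ln (real n)}) sequentially"
      using eventually_ge_at_top[of 2]
    proof eventually_elim
      case (elim n)
      have l: "ln (real n) > 0" using elim by simp
      have sub: "{E. \<bar>real (max_deg n E) / ln (real n) - 1 / ln (1 / q)\<bar> > \<epsilon>}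
          \<subseteq> {E. (a + \<epsilon>) * ln (real n) \<le> real (max_deg n E)} \<union> {E. real (max_deg n E) < \<beta> * ln (real n)}"
      proof
        fix E assume "E \<in> {E. \<bar>real (max_deg n E) / ln (real n) - 1 / ln (1 / q)\<bar> > \<epsilon>}"
        then have "real (max_deg n E) / ln (real n) > a + \<epsilon> \<or> real (max_deg n E) / ln (real n) < a - \<epsilon>"
          unfolding ia by auto
        then have "real (max_deg n E) > (a + \<epsilon>) * ln (real n) \<or> real (max_deg n E) < (a - \<epsilon>) * ln (real n)"
          using l by (auto simp: pos_less_divide_eq pos_divide_less_eq)
        moreover have "(a - \<epsilon>) * ln (real n) \<le> \<beta> * ln (real n)" using \<beta> l by (intro mult_right_mono) auto
        ultimately show "E \<in> {E. (a + \<epsilon>) * ln (real n) \<le> real (max_deg n E)} \<union> {E. real (max_deg n E) < \<beta> * ln (real n)}"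
          by auto
      qed
      have "measure_pmf.prob (G n) {E. \<bar>real (max_deg n E) / ln (real n) - 1 / ln (1 / q)\<bar> > \<epsilon>}
          \<le> measure_pmf.prob (G n) ({E. (a + \<epsilon>) * ln (real n) \<le> real (max_deg n E)} \<union> {E. real (max_deg n E) < \<beta> * ln (real n)})"
        by (rule measure_pmf.finite_measure_mono[OF sub]) simp
      also have "\<dots> \<le> measure_pmf.prob (G n) {E. (a + \<epsilon>) * ln (real n) \<le> real (max_deg n E)}
               + measure_pmf.prob (G n) {E. real (max_deg n E) < \<beta> * ln (real n)}"
        by (rule measure_subadditive) (auto simp: measure_pmf.emeasure_eq_measure)
      finally show ?case .
    qed
    show "(\<lambda>n. measure_pmf.prob (G n)
            {E. \<bar>real (max_deg n E) / ln (real n) - 1 / ln (1 / q)\<bar> > \<epsilon>}) \<longlonglongrightarrow> 0"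
      using tendsto_sandwich[OF _ ev tendsto_const lim[simplified]] by simp
  qed
  have partB: "(\<lambda>n. measure_pmf.expectation (G n) (\<lambda>E. real (max_deg n E)))
            \<sim>[at_top] (\<lambda>n. ln (real n) / ln (1 / q))"
  proof (rule asymp_equivI', rule tendstoI)
    fix \<eta> :: real assume \<eta>: "\<eta> > 0"
    define \<epsilon> where "\<epsilon> = a * \<eta> / 3"
    have \<epsilon>: "\<epsilon> > 0" using a \<eta> by (simp add: \<epsilon>_def)
    define \<gamma> where "\<gamma> = a + \<epsilon>"
    define C where "C = 3 * a"
    define \<beta> where "\<beta> = a - min \<epsilon> (a/2)"
    have \<beta>: "0 < \<beta>" "\<beta> < a" "a - \<epsilon> \<le> \<beta>" "\<beta> \<le> a" using a \<epsilon> by (auto simp: \<beta>_def)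
    define P1 where "P1 n = measure_pmf.prob (G n) {E. \<gamma> * ln (real n) \<le> real (max_deg n E)}" for n
    define P3 where "P3 n = measure_pmf.prob (G n) {E. C * ln (real n) \<le> real (max_deg n E)}" for n
    define P2 where "P2 n = measure_pmf.prob (G n) {E. real (max_deg n E) < \<beta> * ln (real n)}" for n
    have e1: "eventually (\<lambda>n. P1 n < \<eta> / 9) sequentially"
      unfolding P1_def using \<eta> \<epsilon> by (intro order_tendstoD(2)[OF UT0]) (auto simp: \<gamma>_def)
    have e3: "eventually (\<lambda>n. real n * P3 n < a * \<eta> / 3) sequentially"
      unfolding P3_def using \<eta> a by (intro order_tendstoD(2)[OF UT1]) (auto simp: C_def)
    have e2: "eventually (\<lambda>n. P2 n < \<eta> / 3) sequentially"
      unfolding P2_def using \<eta> \<beta> by (intro order_tendstoD(2)[OF LT]) auto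
    show "eventually (\<lambda>n. dist (measure_pmf.expectation (G n) (\<lambda>E. real (max_deg n E)) / (ln (real n) / ln (1 / q))) 1 < \<eta>) sequentially"
      using eventually_ge_at_top[of 3] e1 e2 e3
    proof eventually_elim
      case (elim n)
      define l where "l = ln (real n)"
      have "(3::real) \<le> real n" using elim by simp
      then have "exp 1 \<le> real n" using exp_le by linarith
      then have "ln (exp 1) \<le> ln (real n)" by (subst ln_le_cancel_iff) (use elim in auto)
      then have l1: "l \<ge> 1" unfolding l_def by simp
      define Ex where "Ex = measure_pmf.expectation (G n) (\<lambda>E. real (max_deg n E))"
      have bd: "\<bar>real (max_deg n E)\<bar> \<le> real n" for E using max_deg_le[of n E] elim by simp
      have intD: "integrable (measure_pmf (G n)) (\<lambda>E. real (max_deg n E))" by (rule pmf_int_bdd[OF bd])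
      have intI: "integrable (measure_pmf (G n)) (\<lambda>E. x + y * indicator S E + z * indicator T E :: real)" for x y z S T
        by (rule pmf_int_bdd[where c="\<bar>x\<bar> + \<bar>y\<bar> + \<bar>z\<bar>"]) (auto simp: indicator_def)
      have up: "Ex \<le> \<gamma> * l + C * l * P1 n + real n * P3 n"
      proof -
        have "Ex \<le> measure_pmf.expectation (G n) (\<lambda>E. \<gamma> * l + (C * l) * indicator {E. \<gamma> * ln (real n) \<le> real (max_deg n E)} E
                   + real n * indicator {E. C * ln (real n) \<le> real (max_deg n E)} E)"
          unfolding Ex_def
        proof (rule integral_mono[OF intD intI])
          fix E
          have g0: "\<gamma> * l \<ge> 0" "C * l \<ge> 0" using a \<epsilon> l1 by (auto simp: \<gamma>_def C_def)
          show "real (max_deg n E) \<le> \<gamma> * l + (C * l) * indicator {E. \<gamma> * ln (real n) \<le> real (max_deg n E)} E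
                   + real n * indicator {E. C * ln (real n) \<le> real (max_deg n E)} E"
            using bd[of E] g0 unfolding l_def by (auto simp: indicator_def)
        qed
        also have "\<dots> = \<gamma> * l + C * l * P1 n + real n * P3 n" by (simp add: exp_lin P1_def P3_def l_def)
        finally show ?thesis .
      qed
      have lo: "Ex \<ge> \<beta> * l - \<beta> * l * P2 n"
      proof -
        have "measure_pmf.expectation (G n) (\<lambda>E. \<beta> * l + (- \<beta> * l) * indicator {E. real (max_deg n E) < \<beta> * ln (real n)} E
                   + 0 * indicator {} E) \<le> Ex"
          unfolding Ex_def
        proof (rule integral_mono[OF intI intD])
          fix E
          show "\<beta> * l + (- \<beta> * l) * indicator {E. real (max_deg n E) < \<beta> * ln (real n)} E + 0 * indicator {} E
              \<le> real (max_deg n E)"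
            using \<beta> l1 unfolding l_def by (auto simp: indicator_def)
        qed
        then show ?thesis by (simp only: exp_lin) (simp add: P2_def l_def)
      qed
      have ratio: "Ex / (ln (real n) / ln (1 / q)) = Ex / (a * l)" by (simp add: l_def a_def L_def)
      have al: "a * l > 0" using a l1 by simp
      have "Ex / (a * l) \<le> (\<gamma> * l + C * l * P1 n + real n * P3 n) / (a * l)"
        using up al by (intro divide_right_mono) auto
      also have "\<dots> = \<gamma> / a + 3 * P1 n + real n * P3 n / a / l"
        using a l1 by (simp add: C_def field_simps)
      also have "real n * P3 n / a / l \<le> real n * P3 n / a"
      proof -
        have x0: "real n * P3 n / a \<ge> 0" using a by (simp add: P3_def)
        have "real n * P3 n / a / l \<le> real n * P3 n / a / 1" by (rule divide_left_mono) (use x0 l1 in auto)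
        then show ?thesis by simp
      qed
      also have "\<gamma> / a = 1 + \<eta> / 3" using a by (simp add: \<gamma>_def \<epsilon>_def field_simps)
      finally have U: "Ex / (a * l) \<le> 1 + \<eta>/3 + 3 * P1 n + real n * P3 n / a" by simp
      have "real n * P3 n / a < \<eta> / 3" using elim(4) a by (simp add: field_simps)
      then have U': "Ex / (a * l) < 1 + \<eta>" using U elim(2) by linarith
      have "Ex / (a * l) \<ge> (\<beta> * l - \<beta> * l * P2 n) / (a * l)"
        using lo al by (intro divide_right_mono) auto
      moreover have "(\<beta> * l - \<beta> * l * P2 n) / (a * l) = \<beta> / a - (\<beta> / a) * P2 n"
        using a l1 by (simp add: field_simps)
      moreover have "(\<beta> / a) * P2 n \<le> P2 n"
        using \<beta> a by (intro mult_left_le_one_le) (auto simp: measure_nonneg P2_def)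
      moreover have "\<beta> / a \<ge> 1 - \<eta> / 3" using \<beta> a by (simp add: \<epsilon>_def field_simps)
      ultimately have Lo: "Ex / (a * l) > 1 - \<eta>" using elim(3) \<eta> by linarith
      show ?case unfolding ratio Ex_def[symmetric] dist_real_def using U' Lo by linarith
    qed
  qed
  show ?thesis using partA partB by blast
qed


end
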